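(* Let $1<w\le 2$, $1<h\le 2$, $n\ge 2$, and $\frac12\le y_1<\dots<y_n\le h-\frac12$; put $\Delta y_i=y_{i+1}-y_i$. Consider the linear program in variables $g,\Delta x_1,\dots,\Delta x_{n-1}$: maximize $g$ subject to $\Delta x_i+\Delta y_i\ge g$ for $i=1,\dots,n-1$, $\sum_{i=1}^{n-1}\Delta x_i\le w-1$, and $\Delta x_i\ge 0$ for $i=1,\dots,n-1$. (1) If $\mathcal A$ is a reasonable layout of this instance with gap $\gamma$, then the linear program has a feasible solution with value $g\ge\gamma$. (2) Conversely, for every feasible solution of the linear program with value $g$ and every $\delta>0$, there exists a proper staircase $\mathcal A'$ of this instance with gap at least $g-\delta$.
   Context: The instance is the strip $T=[0,w]\times[0,h]$ with the given $y_i$. A layout is a pair $(\mathbf x,\prec)$ where $\mathbf x=(x_1,\dots,x_n)$ with $x_i\in[\frac12,w-\frac12]$, and $\prec$ is a total order (stacking order) on the squares $s_1,\dots,s_n$, where $s_i$ is the closed axis-parallel unit square with centre $(x_i,y_i)$. If $s_i\prec s_j$ we say $s_j$ is in front of $s_i$ and $s_i$ is behind $s_j$. A point $p$ on the boundary of $s_i$ is visible if every square $s_j$ ($j\neq i$) containing $p$ is behind $s_i$. The visible perimeter of $s_i$ is the total length of its visible boundary points; the gap of $s_i$ is its visible perimeter minus $2$, the gap of a layout is the minimum of the gaps of its squares, and a layout is reasonable if its gap is positive. A proper staircase is a layout with $x_1<x_2<\dots<x_n$ and $s_1\prec s_2\prec\dots\prec s_n$. *)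

theory Defs
  imports "HOL-Analysis.Analysis"
begin

text \<open>Squares are indexed by i < n (0-based). A stacking order is a strict total order prec on {..<n};
  prec i j means s_i is behind s_j (s_j in front of s_i).\<close>

definition sq :: "real \<Rightarrow> real \<Rightarrow> (real \<times> real) set" where
  "sq cx cy = {p. \<bar>fst p - cx\<bar> \<le> 1/2 \<and> \<bar>snd p - cy\<bar> \<le> 1/2}"

definition strict_total_on :: "nat \<Rightarrow> (nat \<Rightarrow> nat \<Rightarrow> bool) \<Rightarrow> bool" where
  "strict_total_on n prec \<longleftrightarrow>
     (\<forall>i<n. \<not> prec i i) \<and>
     (\<forall>i<n. \<forall>j<n. \<forall>k<n. prec i j \<longrightarrow> prec j k \<longrightarrow> prec i k) \<and>
     (\<forall>i<n. \<forall>j<n. i \<noteq> j \<longrightarrow> prec i j \<or> prec j i)"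

definition is_layout :: "nat \<Rightarrow> real \<Rightarrow> (nat \<Rightarrow> real) \<Rightarrow> (nat \<Rightarrow> nat \<Rightarrow> bool) \<Rightarrow> bool" where
  "is_layout n w x prec \<longleftrightarrow> (\<forall>i<n. 1/2 \<le> x i \<and> x i \<le> w - 1/2) \<and> strict_total_on n prec"

definition side :: "nat \<Rightarrow> real \<Rightarrow> real \<Rightarrow> real \<Rightarrow> real \<times> real" where
  "side k cx cy t =
     (if k = 0 then (cx + t, cy - 1/2)
      else if k = 1 then (cx + t, cy + 1/2)
      else if k = 2 then (cx - 1/2, cy + t)
      else (cx + 1/2, cy + t))"

definition visible :: "nat \<Rightarrow> (nat \<Rightarrow> real) \<Rightarrow> (nat \<Rightarrow> real) \<Rightarrow> (nat \<Rightarrow> nat \<Rightarrow> bool)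
    \<Rightarrow> nat \<Rightarrow> real \<times> real \<Rightarrow> bool" where
  "visible n x y prec i p \<longleftrightarrow> (\<forall>j<n. j \<noteq> i \<longrightarrow> p \<in> sq (x j) (y j) \<longrightarrow> prec j i)"

text \<open>Visible perimeter: total length of the visible boundary points, computed side by side
  (corners are a null set).\<close>
definition visible_perimeter :: "nat \<Rightarrow> (nat \<Rightarrow> real) \<Rightarrow> (nat \<Rightarrow> real) \<Rightarrow> (nat \<Rightarrow> nat \<Rightarrow> bool)
    \<Rightarrow> nat \<Rightarrow> real" where
  "visible_perimeter n x y prec i =
     (\<Sum>k<4. measure lborel {t \<in> {-1/2..1/2::real}. visible n x y prec i (side k (x i) (y i) t)})"

definition sq_gap :: "nat \<Rightarrow> (nat \<Rightarrow> real) \<Rightarrow> (nat \<Rightarrow> real) \<Rightarrow> (nat \<Rightarrow> nat \<Rightarrow> bool)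
    \<Rightarrow> nat \<Rightarrow> real" where
  "sq_gap n x y prec i = visible_perimeter n x y prec i - 2"

definition layout_gap :: "nat \<Rightarrow> (nat \<Rightarrow> real) \<Rightarrow> (nat \<Rightarrow> real) \<Rightarrow> (nat \<Rightarrow> nat \<Rightarrow> bool) \<Rightarrow> real" where
  "layout_gap n x y prec = Min ((\<lambda>i. sq_gap n x y prec i) ` {..<n})"

definition reasonable :: "nat \<Rightarrow> real \<Rightarrow> (nat \<Rightarrow> real) \<Rightarrow> (nat \<Rightarrow> real) \<Rightarrow> (nat \<Rightarrow> nat \<Rightarrow> bool) \<Rightarrow> bool" where
  "reasonable n w x y prec \<longleftrightarrow> is_layout n w x prec \<and> layout_gap n x y prec > 0"

definition proper_staircase :: "nat \<Rightarrow> real \<Rightarrow> (nat \<Rightarrow> real) \<Rightarrow> (nat \<Rightarrow> nat \<Rightarrow> bool) \<Rightarrow> bool" where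
  "proper_staircase n w x prec \<longleftrightarrow> is_layout n w x prec \<and>
     (\<forall>i j. i < n \<longrightarrow> j < n \<longrightarrow> i < j \<longrightarrow> x i < x j) \<and>
     (\<forall>i j. i < n \<longrightarrow> j < n \<longrightarrow> (prec i j \<longleftrightarrow> i < j))"

definition lp_feasible :: "nat \<Rightarrow> real \<Rightarrow> (nat \<Rightarrow> real) \<Rightarrow> real \<Rightarrow> (nat \<Rightarrow> real) \<Rightarrow> bool" where
  "lp_feasible n w y g dx \<longleftrightarrow>
     (\<forall>i<n-1. dx i + (y (Suc i) - y i) \<ge> g) \<and>
     (\<Sum>i<n-1. dx i) \<le> w - 1 \<and>
     (\<forall>i<n-1. dx i \<ge> 0)"

end

theory Submission
  imports Defs
begin


definition vset :: "nat \<Rightarrow> (nat \<Rightarrow> real) \<Rightarrow> (nat \<Rightarrow> real) \<Rightarrow> (nat \<Rightarrow> nat \<Rightarrow> bool) \<Rightarrow> nat \<Rightarrow> nat \<Rightarrow> real set" where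
  "vset n x y prec i k = {t \<in> {-1/2..1/2::real}. visible n x y prec i (side k (x i) (y i) t)}"

lemma side_meas: "(\<lambda>t. side k cx cy t) \<in> borel_measurable borel"
  unfolding side_def by (cases "k=0"; cases "k=1"; cases "k=2") simp_all

lemma sq_eq: "sq a b = {a-1/2..a+1/2} \<times> {b-1/2..b+1/2}"
proof (rule set_eqI)
  fix p :: "real \<times> real"
  obtain u v where p: "p = (u, v)" by (cases p)
  show "p \<in> sq a b \<longleftrightarrow> p \<in> {a-1/2..a+1/2} \<times> {b-1/2..b+1/2}"
    unfolding p sq_def mem_Collect_eq fst_conv snd_conv abs_le_iff mem_Times_iff atLeastAtMost_iff
    by auto
qed

lemma sq_borel: "sq a b \<in> sets borel"
  unfolding sq_eq by (intro borel_closed closed_Times closed_atLeastAtMost)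

lemma vis_pred:
  fixes n :: nat and x y :: "nat \<Rightarrow> real" and prec :: "nat \<Rightarrow> nat \<Rightarrow> bool"
  shows "Measurable.pred borel (\<lambda>t::real. visible n x y prec i (side k (x i) (y i) t))"
  unfolding visible_def
proof (rule pred_intros_countable)
  fix j
  show "Measurable.pred borel (\<lambda>t. j < n \<longrightarrow> j \<noteq> i \<longrightarrow> side k (x i) (y i) t \<in> sq (x j) (y j) \<longrightarrow> prec j i)"
  proof (cases "j < n \<and> j \<noteq> i \<and> \<not> prec j i")
    case True
    have p: "Measurable.pred borel (\<lambda>t. side k (x i) (y i) t \<in> sq (x j) (y j))"
      by (rule pred_sets2[OF sq_borel side_meas])
    have "(\<lambda>t. j < n \<longrightarrow> j \<noteq> i \<longrightarrow> side k (x i) (y i) t \<in> sq (x j) (y j) \<longrightarrow> prec j i)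
        = (\<lambda>t. \<not> (side k (x i) (y i) t \<in> sq (x j) (y j)))" using True by auto
    then show ?thesis using p by simp
  next
    case False
    then have "(\<lambda>t. j < n \<longrightarrow> j \<noteq> i \<longrightarrow> side k (x i) (y i) t \<in> sq (x j) (y j) \<longrightarrow> prec j i)
        = (\<lambda>t. True)" by auto
    then show ?thesis by simp
  qed
qed

lemma vset_borel: "vset n x y prec i k \<in> sets lborel"
proof -
  have "{t \<in> space borel. visible n x y prec i (side k (x i) (y i) t)} \<in> sets borel"
    using vis_pred[of n x y prec i k] unfolding pred_def .
  then have "{-1/2..1/2::real} \<inter> {t \<in> space borel. visible n x y prec i (side k (x i) (y i) t)} \<in> sets lborel"
    by simp
  moreover have "vset n x y prec i k = {-1/2..1/2::real} \<inter> {t \<in> space borel. visible n x y prec i (side k (x i) (y i) t)}"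
    unfolding vset_def by auto
  ultimately show ?thesis by simp
qed
lemma vset_sub: "vset n x y prec i k \<subseteq> {-1/2..1/2}"
  unfolding vset_def by auto

lemma fmeas_sub: "A \<in> sets lborel \<Longrightarrow> A \<subseteq> {a..b::real} \<Longrightarrow> A \<in> fmeasurable lborel"
  by (rule fmeasurableI2[OF fmeasurable_compact[OF compact_Icc]])

lemma vset_fmeas: "vset n x y prec i k \<in> fmeasurable lborel"
  using fmeas_sub[OF vset_borel vset_sub] .

lemma meas_Ico: "l \<le> u \<Longrightarrow> measure lborel {l..<u::real} = u - l"
  unfolding measure_def by (subst emeasure_lborel_Ico) auto
lemma meas_Ioc: "l \<le> u \<Longrightarrow> measure lborel {l<..u::real} = u - l"
  unfolding measure_def by (subst emeasure_lborel_Ioc) auto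
lemma meas_Icc: "l \<le> u \<Longrightarrow> measure lborel {l..u::real} = u - l"
  unfolding measure_def by (subst emeasure_lborel_Icc) auto

lemma meas_le_int: "A \<subseteq> {a..b::real} \<Longrightarrow> a \<le> b \<Longrightarrow> measure lborel A \<le> b - a"
proof (cases "A \<in> sets lborel")
  case True
  assume s: "A \<subseteq> {a..b}" and ab: "a \<le> b"
  have "measure lborel A \<le> measure lborel {a..b}"
    by (rule measure_mono_fmeasurable[OF s True fmeasurable_compact]) (rule compact_Icc)
  also have "\<dots> = b - a" by (rule meas_Icc[OF ab])
  finally show ?thesis .
next
  case False
  assume "a \<le> b"
  moreover have "measure lborel A = 0" by (rule measure_notin_sets[OF False])
  ultimately show ?thesis by linarith
qed

lemma vset_le1: "measure lborel (vset n x y prec i k) \<le> 1"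
proof -
  have "measure lborel (vset n x y prec i k) \<le> 1/2 - (-1/2)"
    by (rule meas_le_int[OF vset_sub]) linarith
  then show ?thesis by linarith
qed

lemma pair_le:
  fixes A B :: "real set"
  assumes "A \<in> sets lborel" "B \<in> sets lborel" "A \<subseteq> {-1/2..1/2}" "B \<subseteq> {-1/2..1/2}"
  shows "measure lborel A + measure lborel B \<le> 1 + measure lborel (A \<inter> B)"
proof -
  have fA: "A \<in> fmeasurable lborel" by (rule fmeas_sub[OF assms(1) assms(3)])
  have fB: "B \<in> fmeasurable lborel" by (rule fmeas_sub[OF assms(2) assms(4)])
  have "measure lborel (A \<union> B) = measure lborel A + measure lborel B - measure lborel (A \<inter> B)"
    by (rule measure_Un3[OF fA fB])
  moreover have "A \<union> B \<subseteq> {-1/2..1/2}" using assms(3,4) by blast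
  then have "measure lborel (A \<union> B) \<le> 1/2 - (-1/2)"
    by (rule meas_le_int) linarith
  ultimately show ?thesis by linarith
qed

lemma seq_mono_lt:
  assumes "\<forall>i. Suc i < n \<longrightarrow> f i < (f (Suc i) :: real)" "i < j" "j < n"
  shows "f i < f j"
  using assms(2,3)
proof (induction j)
  case 0 then show ?case by simp
next
  case (Suc j)
  have step: "f j < f (Suc j)" using assms(1) Suc.prems(2) by blast
  show ?case
  proof (cases "i = j")
    case True then show ?thesis using step by simp
  next
    case False
    then have "i < j" using Suc.prems(1) by simp
    then have "f i < f j" using Suc.IH Suc.prems(2) by simp
    then show ?thesis using step by linarith
  qed
qed

lemma seq_mono_le:
  assumes "\<forall>i. Suc i < n \<longrightarrow> f i < (f (Suc i) :: real)" "i \<le> j" "j < n"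
  shows "f i \<le> f j"
proof (cases "i = j")
  case True then show ?thesis by simp
next
  case False
  then have "i < j" using assms(2) by simp
  from seq_mono_lt[OF assms(1) this assms(3)] show ?thesis by simp
qed


definition isfront :: "(nat \<Rightarrow> nat \<Rightarrow> bool) \<Rightarrow> nat set \<Rightarrow> nat \<Rightarrow> bool" where
  "isfront prec A j \<longleftrightarrow> j \<in> A \<and> (\<forall>k\<in>A. k \<noteq> j \<longrightarrow> prec k j)"

definition frontof :: "(nat \<Rightarrow> nat \<Rightarrow> bool) \<Rightarrow> nat set \<Rightarrow> nat" where
  "frontof prec A = (SOME j. isfront prec A j)"

lemma front_exists:
  assumes st: "strict_total_on n prec" and fin: "finite A" and ne: "A \<noteq> {}" and sub: "A \<subseteq> {..<n}"
  shows "\<exists>j. isfront prec A j"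
  using fin ne sub
proof (induction A rule: finite_ne_induct)
  case (singleton a) then show ?case by (auto simp: isfront_def)
next
  case (insert a A)
  then obtain j where j: "isfront prec A j" by auto
  have an: "a < n" using insert.prems by auto
  have An: "A \<subseteq> {..<n}" using insert.prems by auto
  have jA: "j \<in> A" using j by (simp add: isfront_def)
  then have jn: "j < n" using An by auto
  have aj: "a \<noteq> j" using jA insert.hyps by auto
  show ?case
  proof (cases "prec j a")
    case True
    have "isfront prec (insert a A) a"
      unfolding isfront_def
    proof (intro conjI ballI impI)
      show "a \<in> insert a A" by simp
      fix k assume k: "k \<in> insert a A" "k \<noteq> a"
      then have kA: "k \<in> A" by simp
      show "prec k a"
      proof (cases "k = j")
        case True then show ?thesis using \<open>prec j a\<close> by simp
      next
        case False
        then have "prec k j" using j kA by (simp add: isfront_def)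
        moreover have "k < n" using kA An by auto
        ultimately show ?thesis using st \<open>prec j a\<close> an jn unfolding strict_total_on_def by blast
      qed
    qed
    then show ?thesis by blast
  next
    case False
    then have "prec a j" using st an jn aj unfolding strict_total_on_def by blast
    then have "isfront prec (insert a A) j" using j by (auto simp: isfront_def)
    then show ?thesis by blast
  qed
qed

lemma front_unique:
  assumes st: "strict_total_on n prec" and sub: "A \<subseteq> {..<n}"
    and "isfront prec A j" "isfront prec A j'"
  shows "j = j'"
proof (rule ccontr)
  assume ne: "j \<noteq> j'"
  have jA: "j \<in> A" "j' \<in> A" using assms(3,4) by (auto simp: isfront_def)
  then have "prec j' j" "prec j j'" using assms(3,4) ne by (auto simp: isfront_def)
  moreover have "j < n" "j' < n" using jA sub by auto
  ultimately show False using st unfolding strict_total_on_def by blast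
qed

lemma frontof:
  assumes "strict_total_on n prec" "finite A" "A \<noteq> {}" "A \<subseteq> {..<n}"
  shows "isfront prec A (frontof prec A)"
  unfolding frontof_def using front_exists[OF assms] by (rule someI_ex)

lemma frontof_eq:
  assumes "strict_total_on n prec" "finite A" "A \<noteq> {}" "A \<subseteq> {..<n}" "isfront prec A j"
  shows "frontof prec A = j"
  using front_unique[OF assms(1,4) frontof[OF assms(1-4)] assms(5)] .

lemma comb:
  fixes h d :: "nat \<Rightarrow> real" and \<gamma> :: real
  assumes fJ: "finite J" and fP: "finite P" and cJ: "c ` P \<subseteq> J" and card: "card J = card P"
    and g0: "\<gamma> \<ge> 0" and d0: "\<And>p. p \<in> P \<Longrightarrow> d p \<ge> 0"
    and hyp: "\<And>j. j \<in> J \<Longrightarrow> \<gamma> \<le> h j + (\<Sum>p\<in>{p\<in>P. c p = j}. d p)"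
  shows "(\<Sum>p\<in>P. max 0 (\<gamma> - d p)) \<le> (\<Sum>j\<in>J. max 0 (h j))"
proof -
  have per: "(\<Sum>p\<in>{p\<in>P. c p = j}. max 0 (\<gamma> - d p) - \<gamma>) \<le> max 0 (h j) - \<gamma>" if jJ: "j \<in> J" for j
  proof (cases "\<exists>p0\<in>{p\<in>P. c p = j}. d p0 \<ge> \<gamma>")
    case True
    then obtain p0 where p0: "p0 \<in> {p\<in>P. c p = j}" "d p0 \<ge> \<gamma>" by blast
    have fin: "finite {p\<in>P. c p = j}" using fP by simp
    have "(\<Sum>p\<in>{p\<in>P. c p = j}. max 0 (\<gamma> - d p) - \<gamma>)
        = (max 0 (\<gamma> - d p0) - \<gamma>) + (\<Sum>p\<in>{p\<in>P. c p = j} - {p0}. max 0 (\<gamma> - d p) - \<gamma>)"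
      by (rule sum.remove[OF fin p0(1)])
    also have "(\<Sum>p\<in>{p\<in>P. c p = j} - {p0}. max 0 (\<gamma> - d p) - \<gamma>) \<le> 0"
      by (rule sum_nonpos) (use d0 g0 in auto)
    also have "max 0 (\<gamma> - d p0) - \<gamma> = - \<gamma>" using p0(2) by simp
    finally show ?thesis by simp
  next
    case False
    then have lt: "\<And>p. p \<in> {p\<in>P. c p = j} \<Longrightarrow> d p < \<gamma>" by force
    have "(\<Sum>p\<in>{p\<in>P. c p = j}. max 0 (\<gamma> - d p) - \<gamma>) = (\<Sum>p\<in>{p\<in>P. c p = j}. - d p)"
      by (rule sum.cong) (use lt in auto)
    also have "\<dots> = - (\<Sum>p\<in>{p\<in>P. c p = j}. d p)" by (simp add: sum_negf)
    also have "\<dots> \<le> h j - \<gamma>" using hyp[OF jJ] by simp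
    also have "\<dots> \<le> max 0 (h j) - \<gamma>" by simp
    finally show ?thesis .
  qed
  have "(\<Sum>p\<in>P. max 0 (\<gamma> - d p) - \<gamma>) = (\<Sum>j\<in>J. \<Sum>p\<in>{p\<in>P. c p = j}. max 0 (\<gamma> - d p) - \<gamma>)"
    by (rule sum.group[symmetric, OF fP fJ cJ])
  also have "\<dots> \<le> (\<Sum>j\<in>J. max 0 (h j) - \<gamma>)"
    by (rule sum_mono) (rule per)
  finally have "(\<Sum>p\<in>P. max 0 (\<gamma> - d p)) - real (card P) * \<gamma> \<le> (\<Sum>j\<in>J. max 0 (h j)) - real (card J) * \<gamma>"
    by (simp add: sum_subtractf)
  then show ?thesis using card by simp
qed


definition ctx :: "nat \<Rightarrow> real \<Rightarrow> (nat \<Rightarrow> real) \<Rightarrow> (nat \<Rightarrow> real) \<Rightarrow> (nat \<Rightarrow> nat \<Rightarrow> bool) \<Rightarrow> bool" where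
  "ctx n w x y prec \<longleftrightarrow> n \<ge> 2 \<and> w \<le> 2 \<and> (\<forall>i<n. 1/2 \<le> x i \<and> x i \<le> w - 1/2) \<and> strict_total_on n prec
     \<and> (\<forall>i. Suc i < n \<longrightarrow> y i < y (Suc i)) \<and> y (n - 1) - y 0 \<le> 1"

lemma ctx_st: "ctx n w x y prec \<Longrightarrow> strict_total_on n prec"
  by (simp add: ctx_def)

lemma ctx_ym: "ctx n w x y prec \<Longrightarrow> \<forall>i. Suc i < n \<longrightarrow> y i < y (Suc i)"
  by (simp add: ctx_def)

lemma ctx_x: "ctx n w x y prec \<Longrightarrow> i < n \<Longrightarrow> 1/2 \<le> x i \<and> x i \<le> w - 1/2"
  by (simp add: ctx_def)

lemma ctx_xspan: assumes c: "ctx n w x y prec" and i: "i < n" and k: "k < n" shows "x k - x i \<le> 1"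
proof -
  have "1/2 \<le> x i" "x k \<le> w - 1/2" "w \<le> 2" using ctx_x[OF c i] ctx_x[OF c k] c by (auto simp: ctx_def)
  then show ?thesis by linarith
qed

lemma ctx_yspan: assumes c: "ctx n w x y prec" and "i < n" "k < n" shows "y k - y i \<le> 1"
proof -
  have ym: "\<forall>i. Suc i < n \<longrightarrow> y i < y (Suc i)" using c by (simp add: ctx_def)
  have "y k \<le> y (n - 1)" by (rule seq_mono_le[OF ym]) (use assms in auto)
  moreover have "y 0 \<le> y i" by (rule seq_mono_le[OF ym]) (use assms in auto)
  ultimately show ?thesis using c by (simp add: ctx_def)
qed

lemma ctx_irr: "ctx n w x y prec \<Longrightarrow> j < n \<Longrightarrow> \<not> prec j j"
  unfolding ctx_def strict_total_on_def by blast

lemma ctx_trans: "ctx n w x y prec \<Longrightarrow> i < n \<Longrightarrow> j < n \<Longrightarrow> k < n \<Longrightarrow> prec i j \<Longrightarrow> prec j k \<Longrightarrow> prec i k"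
  unfolding ctx_def strict_total_on_def by blast

lemma ctx_asym: "ctx n w x y prec \<Longrightarrow> i < n \<Longrightarrow> j < n \<Longrightarrow> prec i j \<Longrightarrow> prec j i \<Longrightarrow> False"
  using ctx_trans ctx_irr by metis

definition Fr :: "nat \<Rightarrow> (nat \<Rightarrow> nat \<Rightarrow> bool) \<Rightarrow> nat" where
  "Fr n prec = frontof prec {..<n}"

lemma Fr: assumes "ctx n w x y prec" shows "Fr n prec < n" "\<And>k. k < n \<Longrightarrow> k \<noteq> Fr n prec \<Longrightarrow> prec k (Fr n prec)"
proof -
  have "0 < n" using assms by (simp add: ctx_def)
  then have n: "{..<n} \<noteq> {}" by auto
  have "isfront prec {..<n} (Fr n prec)"
    unfolding Fr_def by (rule frontof[OF ctx_st[OF assms]]) (use n in auto)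
  then show "Fr n prec < n" "\<And>k. k < n \<Longrightarrow> k \<noteq> Fr n prec \<Longrightarrow> prec k (Fr n prec)"
    by (auto simp: isfront_def)
qed

definition cp :: "nat \<Rightarrow> (nat \<Rightarrow> nat \<Rightarrow> bool) \<Rightarrow> nat \<Rightarrow> nat" where
  "cp n prec p = (if p < Fr n prec then frontof prec {..p} else frontof prec {Suc p..<n})"

lemma cp_in: assumes c: "ctx n w x y prec" and p: "p < n - 1"
  shows "cp n prec p < n" "cp n prec p \<noteq> Fr n prec"
proof -
  have st: "strict_total_on n prec" using c by (rule ctx_st)
  have "cp n prec p < n \<and> cp n prec p \<noteq> Fr n prec"
  proof (cases "p < Fr n prec")
    case True
    have "isfront prec {..p} (frontof prec {..p})"
      by (rule frontof[OF st]) (use p in auto)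
    then have "frontof prec {..p} \<le> p" by (auto simp: isfront_def)
    then show ?thesis using True p by (simp add: cp_def)
  next
    case False
    have "isfront prec {Suc p..<n} (frontof prec {Suc p..<n})"
      by (rule frontof[OF st]) (use p in auto)
    then have "Suc p \<le> frontof prec {Suc p..<n}" "frontof prec {Suc p..<n} < n" by (auto simp: isfront_def)
    then show ?thesis using False p by (simp add: cp_def)
  qed
  then show "cp n prec p < n" "cp n prec p \<noteq> Fr n prec" by auto
qed

lemma R_cover:
  assumes c: "ctx n w x y prec" and j: "j < n" "j \<noteq> Fr n prec"
    and b: "y j - 1/2 \<le> b" "b \<le> y j + 1/2"
    and fr: "\<And>k. k < n \<Longrightarrow> k \<noteq> j \<Longrightarrow> y k - 1/2 \<le> b \<Longrightarrow> b \<le> y k + 1/2 \<Longrightarrow> prec k j"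
  shows "\<exists>p<n-1. cp n prec p = j \<and> (if p < Fr n prec then y p - 1/2 \<le> b \<and> b < y (Suc p) - 1/2
            else y p + 1/2 < b \<and> b \<le> y (Suc p) + 1/2)"
proof -
  let ?F = "Fr n prec"
  have st: "strict_total_on n prec" using c by (rule ctx_st)
  have ym: "\<forall>i. Suc i < n \<longrightarrow> y i < y (Suc i)" using c by (rule ctx_ym)
  have Fn: "?F < n" using Fr[OF c] by simp
  have nF: "\<not> (y ?F - 1/2 \<le> b \<and> b \<le> y ?F + 1/2)"
  proof
    assume "y ?F - 1/2 \<le> b \<and> b \<le> y ?F + 1/2"
    then have "prec ?F j" using fr[OF Fn] j by auto
    moreover have "prec j ?F" using Fr(2)[OF c j(1)] j(2) by simp
    ultimately show False using ctx_asym[OF c Fn j(1)] by blast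
  qed
  have span0: "y (n - 1) - y 0 \<le> 1" using c by (simp add: ctx_def)
  show ?thesis
  proof (cases "b < y ?F - 1/2")
    case True
    define S where "S = {k. k < n \<and> y k - 1/2 \<le> b}"
    define q where "q = Max S"
    have finS: "finite S" unfolding S_def by simp
    have jS: "j \<in> S" using j b by (simp add: S_def)
    have qS: "q \<in> S" unfolding q_def using finS jS by (intro Max_in) auto
    have qmax: "\<And>k. k \<in> S \<Longrightarrow> k \<le> q" unfolding q_def using finS by simp
    have qn: "q < n" "y q - 1/2 \<le> b" using qS by (auto simp: S_def)
    have qF: "q < ?F"
    proof (rule ccontr)
      assume "\<not> q < ?F"
      then have "y ?F \<le> y q" using seq_mono_le[OF ym _ qn(1)] by simp
      then show False using True qn by linarith
    qed
    then have qn1: "q < n - 1" using Fn by simp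
    have bq: "b < y (Suc q) - 1/2"
    proof (rule ccontr)
      assume "\<not> b < y (Suc q) - 1/2"
      then have "Suc q \<in> S" using qn1 by (simp add: S_def)
      then show False using qmax by fastforce
    qed
    have jq: "j \<le> q" using qmax jS by simp
    have "isfront prec {..q} j"
      unfolding isfront_def
    proof (intro conjI ballI impI)
      show "j \<in> {..q}" using jq by simp
      fix k assume k: "k \<in> {..q}" "k \<noteq> j"
      have kn: "k < n" using k qn by simp
      have "y k \<le> y q" using seq_mono_le[OF ym _ qn(1)] k by simp
      moreover have "y 0 \<le> y k" using seq_mono_le[OF ym _ kn] by simp
      moreover have "y (Suc q) \<le> y (n - 1)" using seq_mono_le[OF ym _ ] qn1 by simp
      ultimately show "prec k j" using fr[OF kn k(2)] qn bq span0 by linarith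
    qed
    then have "frontof prec {..q} = j"
      by (rule frontof_eq[OF st, rotated 3]) (use qn in auto)
    then have "cp n prec q = j" using qF by (simp add: cp_def)
    then show ?thesis using qn1 qF qn bq by auto
  next
    case False
    then have bF: "y ?F + 1/2 < b" using nF by linarith
    define S where "S = {k. k < n \<and> b \<le> y k + 1/2}"
    define q where "q = Min S"
    have finS: "finite S" unfolding S_def by simp
    have jS: "j \<in> S" using j b by (simp add: S_def)
    have qS: "q \<in> S" unfolding q_def using finS jS by (intro Min_in) auto
    have qmin: "\<And>k. k \<in> S \<Longrightarrow> q \<le> k" unfolding q_def using finS by simp
    have qn: "q < n" "b \<le> y q + 1/2" using qS by (auto simp: S_def)
    have qF: "?F < q"
    proof (rule ccontr)
      assume "\<not> ?F < q"
      then have "y q \<le> y ?F" using seq_mono_le[OF ym _ Fn] by simp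
      then show False using bF qn by linarith
    qed
    define p where "p = q - 1"
    have pq: "Suc p = q" using qF by (simp add: p_def)
    have pn1: "p < n - 1" using pq qn by simp
    have pF: "\<not> p < ?F" using pq qF by simp
    have bp: "y p + 1/2 < b"
    proof (rule ccontr)
      assume "\<not> y p + 1/2 < b"
      then have "p \<in> S" using pn1 by (simp add: S_def)
      then show False using qmin pq by fastforce
    qed
    have jq: "q \<le> j" using qmin jS by simp
    have "isfront prec {q..<n} j"
      unfolding isfront_def
    proof (intro conjI ballI impI)
      show "j \<in> {q..<n}" using jq j by simp
      fix k assume k: "k \<in> {q..<n}" "k \<noteq> j"
      have kn: "k < n" using k by simp
      have "y q \<le> y k" using seq_mono_le[OF ym _ kn] k by simp
      moreover have "y k \<le> y (n - 1)" using seq_mono_le[OF ym _ ] kn by simp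
      moreover have "y 0 \<le> y p" using seq_mono_le[OF ym _ ] pn1 by simp
      ultimately show "prec k j" using fr[OF kn k(2)] qn bp span0 by linarith
    qed
    then have "frontof prec {q..<n} = j"
      by (rule frontof_eq[OF st, rotated 3]) (use qn in auto)
    then have "cp n prec p = j" using pF pq by (simp add: cp_def)
    then show ?thesis using pn1 pF pq bp qn by auto
  qed
qed



lemma sum4: "(\<Sum>k<4::nat. f k) = f 0 + f 1 + f 2 + (f 3 :: real)"
  by (simp add: eval_nat_numeral)

lemma vp_expand: "visible_perimeter n x y prec i = measure lborel (vset n x y prec i 0) + measure lborel (vset n x y prec i 1) + measure lborel (vset n x y prec i 2) + measure lborel (vset n x y prec i 3)"
  unfolding visible_perimeter_def vset_def[symmetric] by (rule sum4)

lemma side0: "side 0 cx cy t = (cx + t, cy - 1/2)" by (simp add: side_def)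
lemma side1: "side 1 cx cy t = (cx + t, cy + 1/2)" by (simp add: side_def)
lemma side2: "side 2 cx cy t = (cx - 1/2, cy + t)" by (simp add: side_def)
lemma side3: "side 3 cx cy t = (cx + 1/2, cy + t)" by (simp add: side_def)

lemma in_sq: "(u, v) \<in> sq a b \<longleftrightarrow> a - 1/2 \<le> u \<and> u \<le> a + 1/2 \<and> b - 1/2 \<le> v \<and> v \<le> b + 1/2"
  unfolding sq_def mem_Collect_eq fst_conv snd_conv abs_le_iff by auto

lemma vset_full:
  assumes "\<And>t l. t \<in> {-1/2..1/2} \<Longrightarrow> l < n \<Longrightarrow> l \<noteq> j \<Longrightarrow> side k (x j) (y j) t \<in> sq (x l) (y l) \<Longrightarrow> prec l j"
  shows "vset n x y prec j k = {-1/2..1/2}"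
  unfolding vset_def visible_def using assms by auto

lemma vset_sup:
  assumes "S \<subseteq> {-1/2..1/2}"
    "\<And>t l. t \<in> S \<Longrightarrow> l < n \<Longrightarrow> l \<noteq> j \<Longrightarrow> side k (x j) (y j) t \<in> sq (x l) (y l) \<Longrightarrow> prec l j"
  shows "S \<subseteq> vset n x y prec j k"
  unfolding vset_def visible_def using assms by auto

lemma meas_full: "measure lborel {-1/2..1/2::real} = 1"
  using meas_Icc[of "-1/2" "1/2"] by simp

lemma stair_gap:
  fixes x y :: "nat \<Rightarrow> real"
  assumes xm: "\<forall>i. Suc i < n \<longrightarrow> x i < x (Suc i)" and ym: "\<forall>i. Suc i < n \<longrightarrow> y i < y (Suc i)"
    and xs: "\<forall>i. Suc i < n \<longrightarrow> x (Suc i) - x i \<le> 1" and ys: "\<forall>i. Suc i < n \<longrightarrow> y (Suc i) - y i \<le> 1"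
    and j: "j < n"
  shows "sq_gap n x y (\<lambda>a b. a < b) j \<ge> (if Suc j < n then (x (Suc j) - x j) + (y (Suc j) - y j) else 2)"
proof -
  let ?P = "\<lambda>a b::nat. a < b"
  have v0: "vset n x y ?P j 0 = {-1/2..1/2}"
  proof (rule vset_full)
    fix t l assume l: "l < n" "l \<noteq> j" and m: "side 0 (x j) (y j) t \<in> sq (x l) (y l)"
    show "l < j"
    proof (rule ccontr)
      assume "\<not> l < j"
      then have "j < l" using l by simp
      then have "y j < y l" using seq_mono_lt[OF ym _ l(1)] by simp
      then show False using m unfolding side0 in_sq by linarith
    qed
  qed
  have v2: "vset n x y ?P j 2 = {-1/2..1/2}"
  proof (rule vset_full)
    fix t l assume l: "l < n" "l \<noteq> j" and m: "side 2 (x j) (y j) t \<in> sq (x l) (y l)"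
    show "l < j"
    proof (rule ccontr)
      assume "\<not> l < j"
      then have "j < l" using l by simp
      then have "x j < x l" using seq_mono_lt[OF xm _ l(1)] by simp
      then show False using m unfolding side2 in_sq by linarith
    qed
  qed
  show ?thesis
  proof (cases "Suc j < n")
    case False
    then have jn: "j = n - 1" using j by simp
    have all: "vset n x y ?P j k = {-1/2..1/2}" for k
      by (rule vset_full) (use jn in auto)
    have "sq_gap n x y ?P j = 2"
      unfolding sq_gap_def vp_expand all meas_full by simp
    then show ?thesis using False by simp
  next
    case True
    have s1: "{-1/2..<x (Suc j) - x j - 1/2} \<subseteq> vset n x y ?P j 1"
    proof (rule vset_sup)
      show "{-1/2..<x (Suc j) - x j - 1/2} \<subseteq> {-1/2..1/2}" using xs True by auto
      fix t l assume t: "t \<in> {-1/2..<x (Suc j) - x j - 1/2}" and l: "l < n" "l \<noteq> j"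
        and m: "side 1 (x j) (y j) t \<in> sq (x l) (y l)"
      show "l < j"
      proof (rule ccontr)
        assume "\<not> l < j"
        then have "Suc j \<le> l" using l by simp
        then have "x (Suc j) \<le> x l" using seq_mono_le[OF xm _ l(1)] by simp
        then show False using m t unfolding side1 in_sq by auto
      qed
    qed
    have s3: "{-1/2..<y (Suc j) - y j - 1/2} \<subseteq> vset n x y ?P j 3"
    proof (rule vset_sup)
      show "{-1/2..<y (Suc j) - y j - 1/2} \<subseteq> {-1/2..1/2}" using ys True by auto
      fix t l assume t: "t \<in> {-1/2..<y (Suc j) - y j - 1/2}" and l: "l < n" "l \<noteq> j"
        and m: "side 3 (x j) (y j) t \<in> sq (x l) (y l)"
      show "l < j"
      proof (rule ccontr)
        assume "\<not> l < j"
        then have "Suc j \<le> l" using l by simp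
        then have "y (Suc j) \<le> y l" using seq_mono_le[OF ym _ l(1)] by simp
        then show False using m t unfolding side3 in_sq by auto
      qed
    qed
    have dx: "x j < x (Suc j)" using xm True by simp
    have dy: "y j < y (Suc j)" using ym True by simp
    have m1: "measure lborel (vset n x y ?P j 1) \<ge> x (Suc j) - x j"
    proof -
      have "measure lborel {-1/2..<x (Suc j) - x j - 1/2} \<le> measure lborel (vset n x y ?P j 1)"
        by (rule measure_mono_fmeasurable[OF s1 _ vset_fmeas]) simp
      moreover have "measure lborel {-1/2..<x (Suc j) - x j - 1/2} = x (Suc j) - x j"
        using meas_Ico[of "-1/2" "x (Suc j) - x j - 1/2"] dx by simp
      ultimately show ?thesis by linarith
    qed
    have m3: "measure lborel (vset n x y ?P j 3) \<ge> y (Suc j) - y j"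
    proof -
      have "measure lborel {-1/2..<y (Suc j) - y j - 1/2} \<le> measure lborel (vset n x y ?P j 3)"
        by (rule measure_mono_fmeasurable[OF s3 _ vset_fmeas]) simp
      moreover have "measure lborel {-1/2..<y (Suc j) - y j - 1/2} = y (Suc j) - y j"
        using meas_Ico[of "-1/2" "y (Suc j) - y j - 1/2"] dy by simp
      ultimately show ?thesis by linarith
    qed
    have "sq_gap n x y ?P j = 1 + measure lborel (vset n x y ?P j 1) + 1 + measure lborel (vset n x y ?P j 3) - 2"
      unfolding sq_gap_def vp_expand v0 v2 meas_full by simp
    then show ?thesis using True m1 m3 by simp
  qed
qed

lemma part2:
  fixes w h g \<delta> :: real and n :: nat and y dx :: "nat \<Rightarrow> real"
  assumes w1: "1 < w" and w2: "w \<le> 2" and h2: "h \<le> 2" and n2: "n \<ge> 2"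
    and y0: "1/2 \<le> y 0" and yn: "y (n - 1) \<le> h - 1/2"
    and ym: "\<forall>i. Suc i < n \<longrightarrow> y i < y (Suc i)"
    and feas: "lp_feasible n w y g dx" and dpos: "\<delta> > 0"
  shows "\<exists>x prec. proper_staircase n w x prec \<and> layout_gap n x y prec \<ge> g - \<delta>"
proof -
  define \<tau> where "\<tau> = min 1 \<delta>"
  define c where "c = (w - 1) / real (n - 1)"
  define d where "d = (\<lambda>p. (1 - \<tau>) * dx p + \<tau> * c)"
  define x where "x = (\<lambda>i. 1/2 + (\<Sum>p<i. d p))"
  have tau0: "0 < \<tau>" and tau1: "\<tau> \<le> 1" and taud: "\<tau> \<le> \<delta>" using dpos by (auto simp: \<tau>_def)
  have nr: "real (n - 1) > 0" using n2 by simp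
  have c0: "c > 0" using w1 nr by (simp add: c_def)
  have cn: "real (n - 1) * c = w - 1" using nr by (simp add: c_def)
  have g1: "\<And>i. i < n - 1 \<Longrightarrow> dx i + (y (Suc i) - y i) \<ge> g"
   and sdx: "(\<Sum>i<n-1. dx i) \<le> w - 1"
   and dx0: "\<And>i. i < n - 1 \<Longrightarrow> dx i \<ge> 0"
    using feas unfolding lp_feasible_def by auto
  have dxle: "dx i \<le> w - 1" if "i < n - 1" for i
  proof -
    have "dx i \<le> (\<Sum>i<n-1. dx i)"
      by (rule member_le_sum) (use that dx0 in auto)
    then show ?thesis using sdx by linarith
  qed
  have dpos': "d p > 0" if "p < n - 1" for p
  proof -
    have "(1 - \<tau>) * dx p \<ge> 0" using tau1 dx0[OF that] by simp
    moreover have "\<tau> * c > 0" using tau0 c0 by simp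
    ultimately show ?thesis by (simp add: d_def)
  qed
  have sumd: "(\<Sum>p<n-1. d p) \<le> w - 1"
  proof -
    have "(\<Sum>p<n-1. d p) = (1 - \<tau>) * (\<Sum>p<n-1. dx p) + real (n - 1) * \<tau> * c"
      by (simp add: d_def sum.distrib sum_distrib_left)
    also have "\<dots> = (1 - \<tau>) * (\<Sum>p<n-1. dx p) + \<tau> * (w - 1)"
    proof -
      have "real (n - 1) * \<tau> * c = \<tau> * (real (n - 1) * c)" by (simp add: algebra_simps)
      then show ?thesis using cn by simp
    qed
    also have "\<dots> \<le> (1 - \<tau>) * (w - 1) + \<tau> * (w - 1)"
      using sdx tau1 by (simp add: mult_left_mono)
    finally show ?thesis by (simp add: algebra_simps)
  qed
  have dle: "d p \<le> w - 1" if "p < n - 1" for p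
  proof -
    have "d p \<le> (\<Sum>p<n-1. d p)"
      by (rule member_le_sum) (use that dpos' in \<open>auto intro: less_imp_le\<close>)
    then show ?thesis using sumd by linarith
  qed
  have xS: "x (Suc i) = x i + d i" for i by (simp add: x_def)
  have xm: "\<forall>i. Suc i < n \<longrightarrow> x i < x (Suc i)"
    using dpos' by (auto simp: xS)
  have xs: "\<forall>i. Suc i < n \<longrightarrow> x (Suc i) - x i \<le> 1"
  proof (intro allI impI)
    fix i assume "Suc i < n"
    then have "d i \<le> w - 1" using dle by simp
    then show "x (Suc i) - x i \<le> 1" using w2 by (simp add: xS)
  qed
  have ys: "\<forall>i. Suc i < n \<longrightarrow> y (Suc i) - y i \<le> 1"
  proof (intro allI impI)
    fix i assume i: "Suc i < n"
    have "y (Suc i) \<le> y (n - 1)" by (rule seq_mono_le[OF ym]) (use i in auto)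
    moreover have "y 0 \<le> y i" by (rule seq_mono_le[OF ym]) (use i in auto)
    ultimately show "y (Suc i) - y i \<le> 1" using y0 yn h2 by linarith
  qed
  have xb: "1/2 \<le> x i \<and> x i \<le> w - 1/2" if "i < n" for i
  proof -
    have "0 \<le> (\<Sum>p<i. d p)"
      by (rule sum_nonneg) (use that dpos' in \<open>auto intro: less_imp_le\<close>)
    moreover have "(\<Sum>p<i. d p) \<le> (\<Sum>p<n-1. d p)"
      by (rule sum_mono2) (use that dpos' in \<open>auto intro: less_imp_le\<close>)
    ultimately show ?thesis using sumd by (simp add: x_def)
  qed
  have st: "proper_staircase n w x (\<lambda>a b. a < b)"
    unfolding proper_staircase_def is_layout_def strict_total_on_def
    using xb seq_mono_lt[OF xm] by auto
  have gp: "sq_gap n x y (\<lambda>a b. a < b) j \<ge> g - \<delta>" if j: "j < n" for j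
  proof -
    have sg: "sq_gap n x y (\<lambda>a b. a < b) j \<ge> (if Suc j < n then (x (Suc j) - x j) + (y (Suc j) - y j) else 2)"
      by (rule stair_gap[OF xm ym xs ys j])
    show ?thesis
    proof (cases "Suc j < n")
      case True
      then have jn: "j < n - 1" by simp
      have "\<tau> * dx j \<le> \<tau> * 1"
        by (rule mult_left_mono) (use dxle[OF jn] w2 tau0 in auto)
      moreover have "d j = dx j - \<tau> * dx j + \<tau> * c" by (simp add: d_def algebra_simps)
      moreover have "\<tau> * c > 0" using tau0 c0 by simp
      ultimately have "d j \<ge> dx j - \<delta>" using taud by linarith
      then show ?thesis using sg True g1[OF jn] xS[of j] by simp
    next
      case False
      have "g \<le> dx 0 + (y (Suc 0) - y 0)" using g1[of 0] n2 by simp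
      moreover have "dx 0 \<le> w - 1" using dxle[of 0] n2 by simp
      moreover have "y (Suc 0) - y 0 \<le> 1" using ys n2 by simp
      ultimately show ?thesis using sg False dpos w2 by simp
    qed
  qed
  have "layout_gap n x y (\<lambda>a b. a < b) \<ge> g - \<delta>"
    unfolding layout_gap_def
    by (rule Min.boundedI) (use n2 gp in \<open>auto simp: lessThan_empty_iff\<close>)
  then show ?thesis using st by blast
qed


definition Eset :: "nat \<Rightarrow> (nat \<Rightarrow> real) \<Rightarrow> (nat \<Rightarrow> nat \<Rightarrow> bool) \<Rightarrow> nat \<Rightarrow> real set" where
  "Eset n x prec j = {x j - 1/2..x j + 1/2} - (\<Union>k\<in>{k. k < n \<and> k \<noteq> j \<and> \<not> prec k j}. {x k - 1/2..x k + 1/2})"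

lemma Eset_mem: "a \<in> Eset n x prec j \<longleftrightarrow> x j - 1/2 \<le> a \<and> a \<le> x j + 1/2 \<and> (\<forall>k<n. k \<noteq> j \<longrightarrow> x k - 1/2 \<le> a \<longrightarrow> a \<le> x k + 1/2 \<longrightarrow> prec k j)"
  unfolding Eset_def by auto

lemma Eset_borel: "Eset n x prec j \<in> sets lborel"
  unfolding Eset_def by (intro sets.Diff sets.finite_UN) auto

lemma Eset_sub: "Eset n x prec j \<subseteq> {x j - 1/2..x j + 1/2}"
  unfolding Eset_def by auto

lemma Eset_fmeas: "Eset n x prec j \<in> fmeasurable lborel"
  by (rule fmeas_sub[OF Eset_borel Eset_sub])

lemma H_bound:
  assumes c: "ctx n w x y prec" and j: "j < n"
  shows "measure lborel (vset n x y prec j 0) + measure lborel (vset n x y prec j 1) \<le> 1 + measure lborel (Eset n x prec j)"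
proof -
  let ?A = "vset n x y prec j 0" and ?B = "vset n x y prec j 1" and ?E = "Eset n x prec j"
  have pl: "measure lborel ?A + measure lborel ?B \<le> 1 + measure lborel (?A \<inter> ?B)"
    by (rule pair_le[OF vset_borel vset_borel vset_sub vset_sub])
  have sub: "?A \<inter> ?B \<subseteq> (\<lambda>a. a - x j) ` ?E"
  proof
    fix t assume t: "t \<in> ?A \<inter> ?B"
    have tI: "-1/2 \<le> t" "t \<le> 1/2" using t by (auto simp: vset_def)
    have v0: "visible n x y prec j (side 0 (x j) (y j) t)" and v1: "visible n x y prec j (side 1 (x j) (y j) t)"
      using t by (auto simp: vset_def)
    have "x j + t \<in> ?E"
      unfolding Eset_mem
    proof (intro conjI allI impI)
      show "x j - 1/2 \<le> x j + t" "x j + t \<le> x j + 1/2" using tI by auto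
      fix k assume k: "k < n" "k \<noteq> j" "x k - 1/2 \<le> x j + t" "x j + t \<le> x k + 1/2"
      have s1: "y k - y j \<le> 1" "y j - y k \<le> 1" using ctx_yspan[OF c] k j by auto
      show "prec k j"
      proof (cases "y k \<le> y j")
        case True
        then have "side 0 (x j) (y j) t \<in> sq (x k) (y k)" unfolding side0 in_sq using k s1 by auto
        then show ?thesis using v0 k unfolding visible_def by blast
      next
        case False
        then have "side 1 (x j) (y j) t \<in> sq (x k) (y k)" unfolding side1 in_sq using k s1 by auto
        then show ?thesis using v1 k unfolding visible_def by blast
      qed
    qed
    moreover have "t = (x j + t) - x j" by simp
    ultimately show "t \<in> (\<lambda>a. a - x j) ` ?E" by blast
  qed
  have ABs: "?A \<inter> ?B \<in> sets lborel" using vset_borel by (rule sets.Int) (rule vset_borel)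
  have El: "?E \<in> lmeasurable"
    by (rule fmeasurableI2[OF lmeasurable_compact[OF compact_Icc] Eset_sub]) (use Eset_borel in simp)
  have "measure lborel (?A \<inter> ?B) = measure lebesgue (?A \<inter> ?B)"
    using ABs by simp
  also have "\<dots> \<le> measure lebesgue ((\<lambda>a. a - x j) ` ?E)"
    by (rule measure_mono_fmeasurable[OF sub]) (use ABs measurable_translation_subtract[OF El] in auto)
  also have "\<dots> = measure lebesgue ?E" by (rule measure_translation_subtract)
  also have "\<dots> = measure lborel ?E" using Eset_borel by simp
  finally show ?thesis using pl by linarith
qed


lemma E_sum:
  assumes c: "ctx n w x y prec"
  shows "(\<Sum>j\<in>{..<n} - {Fr n prec}. measure lborel (Eset n x prec j)) \<le> w - 1"
proof -
  let ?F = "Fr n prec" and ?J = "{..<n} - {Fr n prec}"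
  have Fn: "?F < n" using Fr[OF c] by simp
  have disj: "pairwise (\<lambda>i j. disjnt (Eset n x prec i) (Eset n x prec j)) ?J"
  proof (rule pairwiseI)
    fix i j assume i: "i \<in> ?J" and j: "j \<in> ?J" and ij: "i \<noteq> j"
    show "disjnt (Eset n x prec i) (Eset n x prec j)"
    proof (rule ccontr)
      assume "\<not> disjnt (Eset n x prec i) (Eset n x prec j)"
      then obtain a where a: "a \<in> Eset n x prec i" "a \<in> Eset n x prec j" by (auto simp: disjnt_def)
      have "prec j i" using a i j ij unfolding Eset_mem by auto
      moreover have "prec i j" using a i j ij unfolding Eset_mem by auto
      ultimately show False using ctx_asym[OF c] i j by blast
    qed
  qed
  have eq: "measure lborel (\<Union>j\<in>?J. Eset n x prec j) = (\<Sum>j\<in>?J. measure lborel (Eset n x prec j))"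
    by (rule measure_UNION') (use disj Eset_fmeas in auto)
  have sub: "(\<Union>j\<in>?J. Eset n x prec j) \<subseteq> {0..<x ?F - 1/2} \<union> {x ?F + 1/2<..w}"
  proof
    fix a assume "a \<in> (\<Union>j\<in>?J. Eset n x prec j)"
    then obtain j where j: "j \<in> ?J" and a: "a \<in> Eset n x prec j" by blast
    have jn: "j < n" "j \<noteq> ?F" using j by auto
    have xb: "1/2 \<le> x j" "x j \<le> w - 1/2" using ctx_x[OF c jn(1)] by auto
    have ab: "x j - 1/2 \<le> a" "a \<le> x j + 1/2" using a unfolding Eset_mem by auto
    have nF: "\<not> (x ?F - 1/2 \<le> a \<and> a \<le> x ?F + 1/2)"
    proof
      assume "x ?F - 1/2 \<le> a \<and> a \<le> x ?F + 1/2"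
      then have "prec ?F j" using a Fn jn unfolding Eset_mem by auto
      moreover have "prec j ?F" using Fr(2)[OF c jn(1) jn(2)] .
      ultimately show False using ctx_asym[OF c Fn jn(1)] by blast
    qed
    show "a \<in> {0..<x ?F - 1/2} \<union> {x ?F + 1/2<..w}" using xb ab nF by auto
  qed
  have xF: "1/2 \<le> x ?F" "x ?F \<le> w - 1/2" using ctx_x[OF c Fn] by auto
  have Us: "(\<Union>j\<in>?J. Eset n x prec j) \<in> sets lborel"
    by (rule sets.finite_UN) (use Eset_borel in auto)
  have Vf: "{0..<x ?F - 1/2} \<union> {x ?F + 1/2<..w} \<in> fmeasurable lborel"
    by (rule fmeas_sub[of _ 0 w]) (use xF in auto)
  have "measure lborel (\<Union>j\<in>?J. Eset n x prec j) \<le> measure lborel ({0..<x ?F - 1/2} \<union> {x ?F + 1/2<..w})"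
    by (rule measure_mono_fmeasurable[OF sub Us Vf])
  also have "\<dots> \<le> measure lborel {0..<x ?F - 1/2} + measure lborel {x ?F + 1/2<..w}"
    by (rule measure_Un_le) auto
  also have "measure lborel {0..<x ?F - 1/2} = x ?F - 1/2" using meas_Ico[of 0 "x ?F - 1/2"] xF by simp
  also have "measure lborel {x ?F + 1/2<..w} = w - (x ?F + 1/2)" using xF by (intro meas_Ioc) linarith
  finally show ?thesis using eq by linarith
qed

definition Kt :: "nat \<Rightarrow> (nat \<Rightarrow> nat \<Rightarrow> bool) \<Rightarrow> (nat \<Rightarrow> real) \<Rightarrow> nat \<Rightarrow> nat \<Rightarrow> real set" where
  "Kt n prec y j p = (if p < Fr n prec then {y p - 1/2 - y j ..< y (Suc p) - 1/2 - y j}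
                      else {y p + 1/2 - y j <.. y (Suc p) + 1/2 - y j})"

lemma Kt_borel: "Kt n prec y j p \<in> sets lborel"
  unfolding Kt_def by simp

lemma Kt_meas: assumes c: "ctx n w x y prec" and p: "p < n - 1"
  shows "measure lborel (Kt n prec y j p) = y (Suc p) - y p"
proof -
  have "y p < y (Suc p)" using ctx_ym[OF c] p by simp
  then show ?thesis unfolding Kt_def
    using meas_Ico[of "y p - 1/2 - y j" "y (Suc p) - 1/2 - y j"] meas_Ioc[of "y p + 1/2 - y j" "y (Suc p) + 1/2 - y j"]
    by auto
qed

lemma Kt_sub: assumes c: "ctx n w x y prec" and j: "j < n" and p: "p < n - 1"
  shows "Kt n prec y j p \<subseteq> {-2..2}"
proof -
  have "y j - y p \<le> 1" "y (Suc p) - y j \<le> 1" using ctx_yspan[OF c] j p by auto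
  then show ?thesis unfolding Kt_def by auto
qed

lemma V_bound:
  assumes c: "ctx n w x y prec" and j: "j < n" "j \<noteq> Fr n prec"
  shows "measure lborel (vset n x y prec j 2) + measure lborel (vset n x y prec j 3)
     \<le> 1 + (\<Sum>p\<in>{p\<in>{..<n-1}. cp n prec p = j}. y (Suc p) - y p)"
proof -
  let ?A = "vset n x y prec j 2" and ?B = "vset n x y prec j 3"
  let ?P = "{p\<in>{..<n-1}. cp n prec p = j}"
  let ?U = "\<Union>p\<in>?P. Kt n prec y j p"
  have pl: "measure lborel ?A + measure lborel ?B \<le> 1 + measure lborel (?A \<inter> ?B)"
    by (rule pair_le[OF vset_borel vset_borel vset_sub vset_sub])
  have sub: "?A \<inter> ?B \<subseteq> ?U"
  proof
    fix t assume t: "t \<in> ?A \<inter> ?B"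
    have tI: "-1/2 \<le> t" "t \<le> 1/2" using t by (auto simp: vset_def)
    have v2: "visible n x y prec j (side 2 (x j) (y j) t)" and v3: "visible n x y prec j (side 3 (x j) (y j) t)"
      using t by (auto simp: vset_def)
    have fr: "prec k j" if k: "k < n" "k \<noteq> j" "y k - 1/2 \<le> y j + t" "y j + t \<le> y k + 1/2" for k
    proof -
      have s1: "x k - x j \<le> 1" "x j - x k \<le> 1" using ctx_xspan[OF c] k j by auto
      show "prec k j"
      proof (cases "x k \<le> x j")
        case True
        then have "side 2 (x j) (y j) t \<in> sq (x k) (y k)" unfolding side2 in_sq using k s1 by auto
        then show ?thesis using v2 k unfolding visible_def by blast
      next
        case False
        then have "side 3 (x j) (y j) t \<in> sq (x k) (y k)" unfolding side3 in_sq using k s1 by auto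
        then show ?thesis using v3 k unfolding visible_def by blast
      qed
    qed
    obtain p where p: "p < n - 1" "cp n prec p = j"
      and pb: "if p < Fr n prec then y p - 1/2 \<le> y j + t \<and> y j + t < y (Suc p) - 1/2
            else y p + 1/2 < y j + t \<and> y j + t \<le> y (Suc p) + 1/2"
      using R_cover[OF c j, of "y j + t"] tI fr by auto
    have "t \<in> Kt n prec y j p" using pb unfolding Kt_def by (auto split: if_splits)
    then show "t \<in> ?U" using p by blast
  qed
  have ABs: "?A \<inter> ?B \<in> sets lborel" using vset_borel by (rule sets.Int) (rule vset_borel)
  have Us: "?U \<in> sets lborel" by (rule sets.finite_UN) (use Kt_borel in auto)
  have Usub: "?U \<subseteq> {-2..2}" using Kt_sub[OF c j(1)] by auto
  have "measure lborel (?A \<inter> ?B) \<le> measure lborel ?U"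
    by (rule measure_mono_fmeasurable[OF sub ABs fmeas_sub[OF Us Usub]])
  also have "\<dots> \<le> (\<Sum>p\<in>?P. measure lborel (Kt n prec y j p))"
    by (rule measure_UNION_le) (use Kt_borel in auto)
  also have "\<dots> = (\<Sum>p\<in>?P. y (Suc p) - y p)"
    by (rule sum.cong) (use Kt_meas[OF c] in auto)
  finally show ?thesis using pl by linarith
qed


lemma part1:
  fixes w h :: real and n :: nat and y x :: "nat \<Rightarrow> real" and prec :: "nat \<Rightarrow> nat \<Rightarrow> bool"
  assumes w2: "w \<le> 2" and n2: "n \<ge> 2"
    and y0: "1/2 \<le> y 0" and yn: "y (n - 1) \<le> h - 1/2" and h2: "h \<le> 2"
    and ym: "\<forall>i. Suc i < n \<longrightarrow> y i < y (Suc i)"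
    and r: "reasonable n w x y prec"
  shows "\<exists>g dx. lp_feasible n w y g dx \<and> g \<ge> layout_gap n x y prec"
proof -
  have c: "ctx n w x y prec"
    using r w2 n2 y0 yn h2 ym unfolding reasonable_def is_layout_def ctx_def by auto
  define \<gamma> where "\<gamma> = layout_gap n x y prec"
  have g0: "\<gamma> > 0" using r by (simp add: reasonable_def \<gamma>_def)
  let ?F = "Fr n prec" and ?J = "{..<n} - {Fr n prec}" and ?P = "{..<n-1}"
  define d where "d = (\<lambda>p. y (Suc p) - y p)"
  define hh where "hh = (\<lambda>j. measure lborel (Eset n x prec j))"
  have Fn: "?F < n" using Fr[OF c] by simp
  have gle: "\<gamma> \<le> sq_gap n x y prec j" if "j < n" for j
    unfolding \<gamma>_def layout_gap_def by (rule Min_le) (use that in auto)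
  have hyp: "\<gamma> \<le> hh j + (\<Sum>p\<in>{p\<in>?P. cp n prec p = j}. d p)" if j: "j \<in> ?J" for j
  proof -
    have jn: "j < n" "j \<noteq> ?F" using j by auto
    have "sq_gap n x y prec j = measure lborel (vset n x y prec j 0) + measure lborel (vset n x y prec j 1)
       + (measure lborel (vset n x y prec j 2) + measure lborel (vset n x y prec j 3)) - 2"
      unfolding sq_gap_def vp_expand by simp
    then show ?thesis using gle[OF jn(1)] H_bound[OF c jn(1)] V_bound[OF c jn] unfolding hh_def d_def by linarith
  qed
  have cJ: "cp n prec ` ?P \<subseteq> ?J" using cp_in[OF c] by auto
  have card: "card ?J = card ?P" using Fn by simp
  have d0: "d p \<ge> 0" if "p \<in> ?P" for p using ym that by (simp add: d_def less_imp_le)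
  have main: "(\<Sum>p\<in>?P. max 0 (\<gamma> - d p)) \<le> (\<Sum>j\<in>?J. max 0 (hh j))"
    by (rule comb[OF _ _ cJ card _ d0 hyp]) (use g0 in auto)
  have "(\<Sum>j\<in>?J. max 0 (hh j)) = (\<Sum>j\<in>?J. hh j)"
    by (rule sum.cong) (auto simp: hh_def)
  also have "\<dots> \<le> w - 1" unfolding hh_def by (rule E_sum[OF c])
  finally have sdx: "(\<Sum>p\<in>?P. max 0 (\<gamma> - d p)) \<le> w - 1" using main by linarith
  have "lp_feasible n w y \<gamma> (\<lambda>p. max 0 (\<gamma> - d p))"
    unfolding lp_feasible_def using sdx by (auto simp: d_def)
  then show ?thesis unfolding \<gamma>_def by blast
qed

theorem lemma6:
  fixes w h :: real and n :: nat and y :: "nat \<Rightarrow> real"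
  assumes "1 < w" "w \<le> 2" "1 < h" "h \<le> 2" "n \<ge> 2"
    and "1/2 \<le> y 0" "y (n - 1) \<le> h - 1/2"
    and "\<forall>i. Suc i < n \<longrightarrow> y i < y (Suc i)"
  shows "(\<forall>x prec. reasonable n w x y prec \<longrightarrow>
            (\<exists>g dx. lp_feasible n w y g dx \<and> g \<ge> layout_gap n x y prec))
       \<and> (\<forall>g dx \<delta>. lp_feasible n w y g dx \<longrightarrow> \<delta> > 0 \<longrightarrow>
            (\<exists>x prec. proper_staircase n w x prec \<and> layout_gap n x y prec \<ge> g - \<delta>))"
proof (intro conjI allI impI)
  fix x prec assume "reasonable n w x y prec"
  then show "\<exists>g dx. lp_feasible n w y g dx \<and> g \<ge> layout_gap n x y prec"
    using part1[OF assms(2) assms(5) assms(6) assms(7) assms(4) assms(8)] by blast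
next
  fix g \<delta> :: real and dx :: "nat \<Rightarrow> real"
  show "lp_feasible n w y g dx \<Longrightarrow> \<delta> > 0 \<Longrightarrow> \<exists>x prec. proper_staircase n w x prec \<and> layout_gap n x y prec \<ge> g - \<delta>"
    using part2[OF assms(1) assms(2) assms(4) assms(5) assms(6) assms(7) assms(8)] by blast
qed

end
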